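(* Let $n$ be a non-negative integer and $r,s\in\mathbb{C}\setminus\mathbb{Z}^{-}$ with $s\ne0$ and $r-s\notin\mathbb{Z}^{-}$. Then \[ \sum_{k=0}^{n}(-1)^{k}\frac{\binom{n}{k}}{\binom{k+r}{s}}H_k^{(2)}=\frac{s}{r-s+1}\left(\frac{H_n^{(2)}}{\binom{n+r}{r-s+1}}-\sum_{k=1}^{n}\frac{H_n-H_{n-k}}{k\binom{n-k+r}{r-s+1}}\right). \]
   Context: $\mathbb{Z}^{-}$ denotes the set of negative integers. For integers $m\ge0$, $H_m=\sum_{j=1}^m1/j$ and $H_m^{(2)}=\sum_{j=1}^m1/j^2$. Binomial coefficients with complex entries: $\binom{x}{y}=\frac{\Gamma(x+1)}{\Gamma(y+1)\Gamma(x-y+1)}$. *)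

theory Defs
  imports "HOL-Analysis.Analysis"
begin

definition cbinom :: "complex \<Rightarrow> complex \<Rightarrow> complex" where
  "cbinom x y = Gamma (x + 1) / (Gamma (y + 1) * Gamma (x - y + 1))"

definition neg_Ints :: "complex set" where
  "neg_Ints = {of_int k | k. k < 0}"

definition H1 :: "nat \<Rightarrow> complex" where
  "H1 m = (\<Sum>j=1..m. 1 / of_nat j)"

definition H2 :: "nat \<Rightarrow> complex" where
  "H2 m = (\<Sum>j=1..m. 1 / (of_nat j)^2)"

end

theory Submission
  imports Defs
begin

definition DD :: "nat \<Rightarrow> (nat \<Rightarrow> complex) \<Rightarrow> complex" where
  "DD N f = (\<Sum>t\<le>N. (-1)^t * of_nat (N choose t) * f t)"

lemma DD_0 [simp]: "DD 0 f = f 0" by (simp add: DD_def)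

lemma DD_cong: "(\<And>t. t \<le> N \<Longrightarrow> f t = g t) \<Longrightarrow> DD N f = DD N g"
  unfolding DD_def by (intro sum.cong) auto

lemma DD_cmult: "DD N (\<lambda>t. c * f t) = c * DD N f"
  unfolding DD_def by (simp add: sum_distrib_left algebra_simps)

lemma DD_Suc: "DD (Suc N) f = DD N f - DD N (\<lambda>t. f (Suc t))"
proof -
  have "DD (Suc N) f = f 0 + (\<Sum>u\<le>N. (-1)^(Suc u) * of_nat (Suc N choose Suc u) * f (Suc u))"
    unfolding DD_def by (subst sum.atMost_Suc_shift) simp
  also have "\<dots> = f 0 + (\<Sum>u\<le>N. (-1)^(Suc u) * of_nat (N choose Suc u) * f (Suc u))
                 - DD N (\<lambda>t. f (Suc t))"
  proof -
    have "(\<Sum>u\<le>N. (-1)^(Suc u) * of_nat (Suc N choose Suc u) * f (Suc u)) =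
      (\<Sum>u\<le>N. (-1)^(Suc u) * of_nat (N choose Suc u) * f (Suc u)) - (\<Sum>u\<le>N. ((-1)^u * of_nat (N choose u) * f (Suc u)))"
      unfolding sum_subtractf[symmetric] by (intro sum.cong) (auto simp: algebra_simps)
    then show ?thesis unfolding DD_def by simp
  qed
  also have "f 0 + (\<Sum>u\<le>N. (-1)^(Suc u) * of_nat (N choose Suc u) * f (Suc u)) =
             (\<Sum>t\<le>Suc N. (-1)^t * of_nat (N choose t) * f t)"
    by (subst sum.atMost_Suc_shift) simp
  also have "\<dots> = DD N f" unfolding DD_def by simp
  finally show ?thesis .
qed

lemma DD_A1:
  assumes "\<And>m. x + of_nat m \<noteq> 0"
  shows "DD N (\<lambda>t. 1 / (x + of_nat t)) = fact N / pochhammer x (Suc N)"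
  using assms
proof (induction N arbitrary: x)
  case 0 then show ?case by simp
next
  case (Suc N)
  have x0: "x \<noteq> 0" using Suc.prems[of 0] by simp
  have "DD (Suc N) (\<lambda>t. 1 / (x + of_nat t)) = DD N (\<lambda>t. 1 / (x + of_nat t)) - DD N (\<lambda>t. 1 / ((x+1) + of_nat t))"
    by (subst DD_Suc) (simp add: add_ac)
  also have "\<dots> = fact N / pochhammer x (Suc N) - fact N / pochhammer (x+1) (Suc N)"
  proof -
    have pr: "\<And>m. x + 1 + of_nat m \<noteq> 0"
    proof -
      fix m show "x + 1 + of_nat m \<noteq> 0" using Suc.prems[of "Suc m"] by (simp add: algebra_simps)
    qed
    show ?thesis using Suc.IH[OF Suc.prems] Suc.IH[OF pr] by simp
  qed
  also have "\<dots> = fact (Suc N) / pochhammer x (Suc (Suc N))"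
  proof -
    have p1: "pochhammer x (Suc (Suc N)) = x * pochhammer (x+1) (Suc N)" by (rule pochhammer_rec)
    have p2: "pochhammer x (Suc (Suc N)) = pochhammer x (Suc N) * (x + of_nat (Suc N))" by (rule pochhammer_Suc)
    have pr: "\<And>m. x + 1 + of_nat m \<noteq> 0"
    proof -
      fix m show "x + 1 + of_nat m \<noteq> 0" using Suc.prems[of "Suc m"] by (simp add: algebra_simps)
    qed
    have nz: "pochhammer x (Suc N) \<noteq> 0" "pochhammer (x+1) (Suc N) \<noteq> 0" "x + of_nat (Suc N) \<noteq> 0"
      using Suc.prems[of "Suc N"] Suc.prems pr by (auto simp: pochhammer_eq_0_iff eq_neg_iff_add_eq_0)
    have p2nz: "pochhammer x (Suc (Suc N)) \<noteq> 0" using p2 nz by simp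
    have e1: "1 / pochhammer x (Suc N) = (x + of_nat (Suc N)) / pochhammer x (Suc (Suc N))"
      unfolding p2 using nz by simp
    have e2: "1 / pochhammer (x+1) (Suc N) = x / pochhammer x (Suc (Suc N))"
      using p1 nz x0 by (simp add: field_simps)
    have "fact N / pochhammer x (Suc N) - fact N / pochhammer (x+1) (Suc N)
       = fact N * (1 / pochhammer x (Suc N)) - fact N * (1 / pochhammer (x+1) (Suc N))" by simp
    also have "\<dots> = fact N * ((x + of_nat (Suc N)) - x) / pochhammer x (Suc (Suc N))"
      unfolding e1 e2 by (simp add: diff_divide_distrib[symmetric] algebra_simps)
    also have "\<dots> = fact (Suc N) / pochhammer x (Suc (Suc N))" by (simp add: algebra_simps)
    finally show ?thesis .
  qed
  finally show ?case .
qed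

lemma poch_aux:
  assumes "\<And>m. x + of_nat m \<noteq> (0::complex)"
  shows "1 / pochhammer x (Suc N) = (x + of_nat (Suc N)) / pochhammer x (Suc (Suc N))"
    and "1 / pochhammer (x+1) (Suc N) = x / pochhammer x (Suc (Suc N))"
    and "pochhammer x (Suc (Suc N)) \<noteq> 0"
proof -
  have x0: "x \<noteq> 0" using assms[of 0] by simp
  have pr: "\<And>m. x + 1 + of_nat m \<noteq> 0"
  proof -
    fix m show "x + 1 + of_nat m \<noteq> 0" using assms[of "Suc m"] by (simp add: algebra_simps)
  qed
  have p1: "pochhammer x (Suc (Suc N)) = x * pochhammer (x+1) (Suc N)" by (rule pochhammer_rec)
  have p2: "pochhammer x (Suc (Suc N)) = pochhammer x (Suc N) * (x + of_nat (Suc N))" by (rule pochhammer_Suc)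
  have nz: "pochhammer x (Suc N) \<noteq> 0" "pochhammer (x+1) (Suc N) \<noteq> 0" "x + of_nat (Suc N) \<noteq> 0"
    using assms[of "Suc N"] assms pr by (auto simp: pochhammer_eq_0_iff eq_neg_iff_add_eq_0)
  show "pochhammer x (Suc (Suc N)) \<noteq> 0" using p2 nz by simp
  show "1 / pochhammer x (Suc N) = (x + of_nat (Suc N)) / pochhammer x (Suc (Suc N))"
    unfolding p2 using nz by simp
  show "1 / pochhammer (x+1) (Suc N) = x / pochhammer x (Suc (Suc N))"
    using p1 nz x0 by (simp add: field_simps)
qed

lemma DD_A2:
  assumes "\<And>m. x + of_nat m \<noteq> 0"
  shows "DD N (\<lambda>t. 1 / (x + of_nat t)^2) = fact N / pochhammer x (Suc N) * (\<Sum>m\<le>N. 1 / (x + of_nat m))"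
  using assms
proof (induction N arbitrary: x)
  case 0 then show ?case by (simp add: power2_eq_square)
next
  case (Suc N)
  have x0: "x \<noteq> 0" using Suc.prems[of 0] by simp
  have u0: "x + of_nat (Suc N) \<noteq> 0" using Suc.prems[of "Suc N"] by simp
  have pr: "\<And>m. x + 1 + of_nat m \<noteq> 0"
  proof -
    fix m show "x + 1 + of_nat m \<noteq> 0" using Suc.prems[of "Suc m"] by (simp add: algebra_simps)
  qed
  define e where "e = (\<Sum>m\<le>Suc N. 1 / (x + of_nat m))"
  have E1: "(\<Sum>m\<le>N. 1 / (x + of_nat m)) = e - 1 / (x + of_nat (Suc N))"
    unfolding e_def by simp
  have E2: "(\<Sum>m\<le>N. 1 / (x + 1 + of_nat m)) = e - 1 / x"
    unfolding e_def by (subst sum.atMost_Suc_shift) (simp add: add_ac)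
  note pa = poch_aux[OF Suc.prems, of N]
  define P2 where "P2 = pochhammer x (Suc (Suc N))"
  have "DD (Suc N) (\<lambda>t. 1 / (x + of_nat t)^2) = DD N (\<lambda>t. 1 / (x + of_nat t)^2) - DD N (\<lambda>t. 1 / ((x+1) + of_nat t)^2)"
    by (subst DD_Suc) (simp add: add_ac)
  also have "\<dots> = fact N * (1 / pochhammer x (Suc N)) * (e - 1 / (x + of_nat (Suc N)))
       - fact N * (1 / pochhammer (x+1) (Suc N)) * (e - 1 / x)"
    using Suc.IH[OF Suc.prems] Suc.IH[OF pr] E1 E2 by simp
  also have "\<dots> = fact N * ((x + of_nat (Suc N)) / P2) * (e - 1 / (x + of_nat (Suc N)))
       - fact N * (x / P2) * (e - 1 / x)" unfolding pa(1,2) P2_def ..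
  also have "\<dots> = fact N / P2 * ((x + of_nat (Suc N)) * (e - 1 / (x + of_nat (Suc N))))
       - fact N / P2 * (x * (e - 1 / x))" by (simp add: ac_simps)
  also have "(x + of_nat (Suc N)) * (e - 1 / (x + of_nat (Suc N))) = (x + of_nat (Suc N)) * e - 1"
    using u0 by (simp add: right_diff_distrib)
  also have "x * (e - 1 / x) = x * e - 1"
    using x0 by (simp add: right_diff_distrib)
  also have "fact N / P2 * ((x + of_nat (Suc N)) * e - 1) - fact N / P2 * (x * e - 1)
      = fact N / P2 * (((x + of_nat (Suc N)) * e - 1) - (x * e - 1))" by (simp only: right_diff_distrib)
  also have "((x + of_nat (Suc N)) * e - 1) - (x * e - 1) = of_nat (Suc N) * e" by (simp add: algebra_simps)
  also have "fact N / P2 * (of_nat (Suc N) * e) = fact N * (of_nat (Suc N)) / P2 * e" by simp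
  also have "\<dots> = fact (Suc N) / P2 * e" by (simp add: algebra_simps)
  finally show ?case unfolding P2_def e_def .
qed

lemma H1_Suc: "H1 (Suc m) = H1 m + 1 / of_nat (Suc m)"
  by (simp add: H1_def)

lemma H2_Suc: "H2 (Suc m) = H2 m + 1 / (of_nat (Suc m))^2"
  by (simp add: H2_def)

lemma Hdiff: "(\<Sum>m\<le>M. 1 / (of_nat (Suc i) + of_nat m :: complex)) = H1 (Suc i + M) - H1 i"
proof (induction M)
  case 0 then show ?case by (simp add: H1_Suc)
next
  case (Suc M)
  then show ?case by (simp add: H1_Suc add_ac)
qed

lemma DD_V: "DD (Suc M) (\<lambda>t. H2 (i + t)) = - DD M (\<lambda>t. 1 / (of_nat (Suc i) + of_nat t)^2)"
proof (induction M arbitrary: i)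
  case 0 then show ?case by (simp add: DD_Suc H2_Suc)
next
  case (Suc M)
  have "DD (Suc (Suc M)) (\<lambda>t. H2 (i + t)) = DD (Suc M) (\<lambda>t. H2 (i + t)) - DD (Suc M) (\<lambda>t. H2 (Suc i + t))"
    by (subst DD_Suc) simp
  also have "\<dots> = - DD M (\<lambda>t. 1 / (of_nat (Suc i) + of_nat t)^2) + DD M (\<lambda>t. 1 / (of_nat (Suc (Suc i)) + of_nat t)^2)"
    using Suc.IH[of i] Suc.IH[of "Suc i"] by simp
  also have "DD M (\<lambda>t. 1 / (of_nat (Suc (Suc i)) + of_nat t)^2) = DD M (\<lambda>t. 1 / (of_nat (Suc i) + of_nat (Suc t))^2)"
    by (intro DD_cong) (simp add: add_ac)
  also have "- DD M (\<lambda>t. 1 / (of_nat (Suc i) + of_nat t)^2) + DD M (\<lambda>t. 1 / (of_nat (Suc i) + of_nat (Suc t))^2)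
     = - DD (Suc M) (\<lambda>t. 1 / (of_nat (Suc i) + of_nat t)^2)"
    by (subst DD_Suc) simp
  finally show ?case .
qed

lemma DD_Vandermonde:
  assumes "\<And>j. c + of_nat j \<noteq> (0::complex)"
  shows "DD k (\<lambda>i. pochhammer b i / pochhammer c i) = pochhammer (c - b) k / pochhammer c k"
  using assms
proof (induction k arbitrary: b c)
  case 0 then show ?case by simp
next
  case (Suc k)
  have c0: "c \<noteq> 0" using Suc.prems[of 0] by simp
  have ck: "c + of_nat k \<noteq> 0" using Suc.prems[of k] by simp
  have pr: "\<And>m. c + 1 + of_nat m \<noteq> 0"
  proof -
    fix m show "c + 1 + of_nat m \<noteq> 0" using Suc.prems[of "Suc m"] by (simp add: algebra_simps)
  qed
  have pck: "pochhammer c k \<noteq> 0" using Suc.prems by (auto simp: pochhammer_eq_0_iff eq_neg_iff_add_eq_0)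
  have pc1k: "pochhammer (c+1) k \<noteq> 0" using pr by (auto simp: pochhammer_eq_0_iff eq_neg_iff_add_eq_0)
  have "DD (Suc k) (\<lambda>i. pochhammer b i / pochhammer c i) = DD k (\<lambda>i. pochhammer b i / pochhammer c i)
       - DD k (\<lambda>i. b / c * (pochhammer (b+1) i / pochhammer (c+1) i))"
    by (subst DD_Suc) (simp add: pochhammer_rec)
  also have "\<dots> = pochhammer (c - b) k / pochhammer c k - b / c * (pochhammer (c - b) k / pochhammer (c+1) k)"
    unfolding DD_cmult Suc.IH[OF Suc.prems] Suc.IH[OF pr] by simp
  also have "\<dots> = pochhammer (c - b) (Suc k) / pochhammer c (Suc k)"
  proof -
    define X where "X = pochhammer (c - b) k"
    define P' where "P' = pochhammer c (Suc k)"
    have e1: "P' = pochhammer c k * (c + of_nat k)" unfolding P'_def by (rule pochhammer_Suc)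
    have e2: "P' = c * pochhammer (c+1) k" unfolding P'_def by (rule pochhammer_rec)
    have P'0: "P' \<noteq> 0" using e2 c0 pc1k by simp
    have f1: "1 / pochhammer c k = (c + of_nat k) / P'" unfolding e1 using ck pck by simp
    have f2: "b / c * (X / pochhammer (c+1) k) = X * b / P'" unfolding e2 using c0 pc1k by simp
    have "X / pochhammer c k - b / c * (X / pochhammer (c+1) k) = X * (c + of_nat k) / P' - X * b / P'"
      unfolding f2 using f1 by (metis times_divide_eq_right mult.right_neutral)
    also have "\<dots> = X * (c - b + of_nat k) / P'" by (simp add: diff_divide_distrib[symmetric] algebra_simps)
    also have "\<dots> = pochhammer (c - b) (Suc k) / P'" unfolding X_def by (simp add: pochhammer_Suc)
    finally show ?thesis unfolding X_def P'_def .
  qed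
  finally show ?case .
qed

lemma W_lemma:
  assumes "i \<le> n"
  shows "(\<Sum>k\<le>n. (-1)^(k+i) * of_nat (n choose k) * of_nat (k choose i) * H2 k)
     = of_nat (n choose i) * DD (n - i) (\<lambda>t. H2 (i + t))"
proof -
  have "(\<Sum>k\<le>n. (-1)^(k+i) * of_nat (n choose k) * of_nat (k choose i) * H2 k)
      = (\<Sum>k\<in>{i..n}. (-1)^(k+i) * of_nat (n choose k) * of_nat (k choose i) * H2 k)"
    by (rule sum.mono_neutral_right) auto
  also have "\<dots> = (\<Sum>t\<le>n-i. (-1)^(i+t+i) * of_nat (n choose (i+t)) * of_nat ((i+t) choose i) * H2 (i+t))"
    by (rule sum.reindex_bij_witness[of _ "\<lambda>t. i + t" "\<lambda>k. k - i"]) (use assms in auto)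
  also have "\<dots> = (\<Sum>t\<le>n-i. of_nat (n choose i) * ((-1)^t * of_nat ((n - i) choose t) * H2 (i+t)))"
  proof (intro sum.cong refl)
    fix t assume t: "t \<in> {..n-i}"
    have "(n choose (i+t)) * ((i+t) choose i) = (n choose i) * ((n - i) choose (i + t - i))"
      by (rule choose_mult) (use t assms in auto)
    then have cm: "of_nat (n choose (i+t)) * of_nat ((i+t) choose i) = (of_nat (n choose i) * of_nat ((n - i) choose t) :: complex)"
      by (metis add_diff_cancel_left' of_nat_mult)
    have ee: "i+t+i = t + 2*i" by simp
    have pw: "((-1::complex)^(i+t+i)) = (-1)^t"
      unfolding ee by (simp add: power_add power_mult)
    have "(-1)^(i+t+i) * of_nat (n choose (i+t)) * of_nat ((i+t) choose i) * H2 (i+t) =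
        (-1)^t * (of_nat (n choose (i+t)) * of_nat ((i+t) choose i)) * H2 (i+t)"
      unfolding pw by (simp only: mult.assoc)
    also have "\<dots> = of_nat (n choose i) * ((-1)^t * of_nat ((n - i) choose t) * H2 (i+t))"
      unfolding cm by (simp only: ac_simps)
    finally show "(-1)^(i+t+i) * of_nat (n choose (i+t)) * of_nat ((i+t) choose i) * H2 (i+t) =
        of_nat (n choose i) * ((-1)^t * of_nat ((n - i) choose t) * H2 (i+t))" .
  qed
  also have "\<dots> = of_nat (n choose i) * DD (n - i) (\<lambda>t. H2 (i + t))"
    unfolding DD_def by (simp add: sum_distrib_left)
  finally show ?thesis .
qed

lemma K_lemma:
  assumes "i < n"
  shows "of_nat (n choose i) * DD (n - i) (\<lambda>t. H2 (i + t)) = - (H1 n - H1 i) / of_nat (n - i)"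
proof -
  obtain M where M: "n - i = Suc M" using assms by (metis Suc_diff_Suc)
  have n: "n = Suc i + M" using M assms by simp
  have nz: "\<And>m. of_nat (Suc i) + of_nat m \<noteq> (0::complex)"
    by (metis of_nat_add of_nat_eq_0_iff add_is_0 nat.distinct(1))
  have D: "DD (n - i) (\<lambda>t. H2 (i + t)) = - (fact M / pochhammer (of_nat (Suc i)) (Suc M) * (H1 n - H1 i))"
  proof -
    have "DD (n - i) (\<lambda>t. H2 (i + t)) = DD (Suc M) (\<lambda>t. H2 (i + t))" by (simp only: M)
    also have "\<dots> = - (fact M / pochhammer (of_nat (Suc i)) (Suc M) * (H1 (Suc i + M) - H1 i))"
      unfolding DD_V DD_A2[OF nz] Hdiff ..
    finally show ?thesis unfolding n[symmetric] .
  qed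
  have F: "fact n = fact i * pochhammer (of_nat (Suc i) :: complex) (Suc M)"
    using pochhammer_product'[of "1::complex" i "Suc M"] unfolding n
    by (simp add: pochhammer_fact add_ac)
  have C: "(of_nat (n choose i) :: complex) = fact n / (fact i * fact (Suc M))"
    using binomial_fact[of i n] assms M by simp
  show ?thesis
  proof -
    define Pc where "Pc = pochhammer (of_nat (Suc i) :: complex) (Suc M)"
    define fM where "fM = (fact M :: complex)"
    define fi where "fi = (fact i :: complex)"
    define Hd where "Hd = H1 n - H1 i"
    have fi0: "fi \<noteq> 0" unfolding fi_def by simp
    have fM0: "fM \<noteq> 0" unfolding fM_def by simp
    have Pc0: "Pc \<noteq> 0" using F unfolding Pc_def by (metis fact_nonzero mult_zero_right)
    have fS: "(fact (Suc M) :: complex) = of_nat (Suc M) * fM" unfolding fM_def by (simp add: fact_Suc)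
    have S0: "(of_nat (Suc M) :: complex) \<noteq> 0" by (simp del: of_nat_Suc)
    have C': "(of_nat (n choose i) :: complex) = Pc / (of_nat (Suc M) * fM)"
      unfolding C F fS Pc_def[symmetric] fi_def[symmetric] using fi0 by simp
    have "of_nat (n choose i) * DD (n - i) (\<lambda>t. H2 (i + t)) = - (Pc / (of_nat (Suc M) * fM) * (fM / Pc * Hd))"
      unfolding D C' Pc_def[symmetric] fM_def[symmetric] Hd_def[symmetric] by simp
    also have "\<dots> = - Hd / of_nat (Suc M)"
    proof -
      have "fM + fM * of_nat M \<noteq> 0" using fM0 S0 by (metis mult.commute mult_eq_0_iff distrib_left mult_1 of_nat_Suc add.commute)
      then show ?thesis using Pc0 fM0 S0 by (simp add: field_simps)
    qed
    finally show ?thesis unfolding Hd_def M .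
  qed
qed

lemma core:
  "(\<Sum>k=0..n. (-1)^k * of_nat (n choose k) * DD k P * H2 k)
     = H2 n * P n - (\<Sum>k=1..n. (H1 n - H1 (n-k)) / of_nat k * P (n-k))"
proof -
  have ext: "DD k P = (\<Sum>i\<le>n. (-1)^i * of_nat (k choose i) * P i)" if "k \<le> n" for k
    unfolding DD_def by (rule sum.mono_neutral_left) (use that in auto)
  have "(\<Sum>k=0..n. (-1)^k * of_nat (n choose k) * DD k P * H2 k)
      = (\<Sum>k\<le>n. \<Sum>i\<le>n. (-1)^k * of_nat (n choose k) * ((-1)^i * of_nat (k choose i) * P i) * H2 k)"
    unfolding atLeast0AtMost
    by (intro sum.cong refl) (simp add: ext sum_distrib_left sum_distrib_right)
  also have "\<dots> = (\<Sum>i\<le>n. \<Sum>k\<le>n. (-1)^k * of_nat (n choose k) * ((-1)^i * of_nat (k choose i) * P i) * H2 k)"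
    by (rule sum.swap)
  also have "\<dots> = (\<Sum>i\<le>n. P i * (\<Sum>k\<le>n. (-1)^(k+i) * of_nat (n choose k) * of_nat (k choose i) * H2 k))"
    by (intro sum.cong refl) (simp add: sum_distrib_left power_add ac_simps)
  also have "\<dots> = (\<Sum>i\<le>n. P i * (of_nat (n choose i) * DD (n - i) (\<lambda>t. H2 (i + t))))"
    by (intro sum.cong refl) (simp add: W_lemma)
  also have "\<dots> = P n * H2 n + (\<Sum>i<n. P i * (of_nat (n choose i) * DD (n - i) (\<lambda>t. H2 (i + t))))"
  proof -
    have "{..n} = insert n {..<n}" by auto
    then show ?thesis by simp
  qed
  also have "(\<Sum>i<n. P i * (of_nat (n choose i) * DD (n - i) (\<lambda>t. H2 (i + t))))
      = - (\<Sum>i<n. (H1 n - H1 i) / of_nat (n - i) * P i)"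
    unfolding sum_negf[symmetric] by (intro sum.cong refl) (simp add: K_lemma algebra_simps minus_divide_left del: of_nat_diff)
  also have "(\<Sum>i<n. (H1 n - H1 i) / of_nat (n - i) * P i) = (\<Sum>k=1..n. (H1 n - H1 (n-k)) / of_nat k * P (n-k))"
    by (rule sum.reindex_bij_witness[of _ "\<lambda>k. n - k" "\<lambda>i. n - i"]) auto
  finally show ?thesis by (simp add: ac_simps)
qed

lemma negI_shift: "z \<notin> neg_Ints \<Longrightarrow> z + 1 \<notin> \<int>\<^sub>\<le>\<^sub>0"
proof
  assume z: "z \<notin> neg_Ints" and "z + 1 \<in> \<int>\<^sub>\<le>\<^sub>0"
  then obtain m where m: "m \<le> 0" "z + 1 = of_int m" by (auto elim!: nonpos_Ints_cases)
  then have "z = of_int (m - 1)" by (simp add: algebra_simps)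
  moreover have "m - 1 < 0" using m by simp
  ultimately have "z \<in> neg_Ints" unfolding neg_Ints_def by blast
  with z show False by simp
qed

lemma negI_nz: "z \<notin> \<int>\<^sub>\<le>\<^sub>0 \<Longrightarrow> z + of_nat j \<noteq> 0"
proof
  assume "z \<notin> \<int>\<^sub>\<le>\<^sub>0" "z + of_nat j = 0"
  then show False by (metis add.commute add_diff_cancel_left' diff_0 minus_of_nat_in_nonpos_Ints)
qed

theorem theorem18:
  fixes n :: nat and r s :: complex
  assumes "r \<notin> neg_Ints" and "s \<notin> neg_Ints" and "s \<noteq> 0"
    and "r - s \<notin> neg_Ints"
  shows "(\<Sum>k=0..n. (-1)^k * of_nat (n choose k) / cbinom (of_nat k + r) s * H2 k)
       = s / (r - s + 1) *
         (H2 n / cbinom (of_nat n + r) (r - s + 1)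
          - (\<Sum>k=1..n. (H1 n - H1 (n - k)) / (of_nat k * cbinom (of_nat (n - k) + r) (r - s + 1))))"
proof -
  define a where "a = r - s + 1"
  define c where "c = r + 1"
  have ha: "a \<notin> \<int>\<^sub>\<le>\<^sub>0" unfolding a_def using negI_shift[OF assms(4)] .
  have hc: "c \<notin> \<int>\<^sub>\<le>\<^sub>0" unfolding c_def using negI_shift[OF assms(1)] .
  have hs1: "s + 1 \<notin> \<int>\<^sub>\<le>\<^sub>0" using negI_shift[OF assms(2)] .
  have hs: "s \<notin> \<int>\<^sub>\<le>\<^sub>0"
  proof
    assume "s \<in> \<int>\<^sub>\<le>\<^sub>0"
    then obtain m where m: "m \<le> 0" "s = of_int m" by (auto elim!: nonpos_Ints_cases)
    then have "m < 0" using assms(3) by (cases "m = 0") auto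
    with m assms(2) show False unfolding neg_Ints_def by blast
  qed
  have ga: "Gamma a \<noteq> 0" using ha by (simp add: Gamma_eq_zero_iff)
  have gc: "Gamma c \<noteq> 0" using hc by (simp add: Gamma_eq_zero_iff)
  have gs: "Gamma s \<noteq> 0" using hs by (simp add: Gamma_eq_zero_iff)
  have gs1: "Gamma (s+1) \<noteq> 0" using hs1 by (simp add: Gamma_eq_zero_iff)
  have a0: "a \<noteq> 0" using ha by auto
  have cnz: "\<And>j. c + of_nat j \<noteq> 0" using negI_nz[OF hc] .
  have pcnz: "\<And>k. pochhammer c k \<noteq> 0" using cnz by (auto simp: pochhammer_eq_0_iff eq_neg_iff_add_eq_0)
  have pa: "\<And>k. Gamma (a + of_nat k) = pochhammer a k * Gamma a" using pochhammer_Gamma[OF ha] ga by simp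
  have pc: "\<And>k. Gamma (c + of_nat k) = pochhammer c k * Gamma c" using pochhammer_Gamma[OF hc] gc by simp
  have ps: "\<And>k. Gamma (s + of_nat k) = pochhammer s k * Gamma s" using pochhammer_Gamma[OF hs] gs by simp
  define K where "K = Gamma (s+1) * Gamma a / Gamma c"
  define Pf where "Pf = (\<lambda>i. pochhammer s i / pochhammer c i)"
  have G1: "1 / cbinom (of_nat k + r) s = K * DD k Pf" for k
  proof -
    have "DD k Pf = pochhammer a k / pochhammer c k"
    proof -
      have "c - s = a" by (simp add: a_def c_def algebra_simps)
      then show ?thesis unfolding Pf_def DD_Vandermonde[OF cnz] by simp
    qed
    moreover have "cbinom (of_nat k + r) s = Gamma (c + of_nat k) / (Gamma (s+1) * Gamma (a + of_nat k))"
      unfolding cbinom_def a_def c_def by (simp add: algebra_simps)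
    ultimately show ?thesis unfolding K_def pa pc using gc gs1 ga pcnz[of k]
      by (simp add: field_simps)
  qed
  have G2: "s / (r - s + 1) * (1 / cbinom (of_nat m + r) (r - s + 1)) = K * Pf m" for m
  proof -
    have "cbinom (of_nat m + r) (r - s + 1) = Gamma (c + of_nat m) / (Gamma (a+1) * Gamma (s + of_nat m))"
      unfolding cbinom_def a_def c_def by (simp add: algebra_simps)
    moreover have "Gamma (a+1) = a * Gamma a" using Gamma_plus1[OF ha] .
    moreover have "Gamma (s+1) = s * Gamma s" using Gamma_plus1[OF hs] .
    ultimately show ?thesis unfolding K_def pc ps Pf_def a_def[symmetric] using gc gs ga a0 pcnz[of m]
      by (simp add: field_simps)
  qed
  have "(\<Sum>k=0..n. (-1)^k * of_nat (n choose k) / cbinom (of_nat k + r) s * H2 k)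
      = (\<Sum>k=0..n. K * ((-1)^k * of_nat (n choose k) * DD k Pf * H2 k))"
  proof (intro sum.cong refl)
    fix k
    have "(-1)^k * of_nat (n choose k) / cbinom (of_nat k + r) s * H2 k
        = (-1)^k * of_nat (n choose k) * (1 / cbinom (of_nat k + r) s) * H2 k" by simp
    also have "\<dots> = K * ((-1)^k * of_nat (n choose k) * DD k Pf * H2 k)" unfolding G1 by (simp add: ac_simps)
    finally show "(-1)^k * of_nat (n choose k) / cbinom (of_nat k + r) s * H2 k = K * ((-1)^k * of_nat (n choose k) * DD k Pf * H2 k)" .
  qed
  also have "\<dots> = K * (H2 n * Pf n - (\<Sum>k=1..n. (H1 n - H1 (n-k)) / of_nat k * Pf (n-k)))"
    unfolding sum_distrib_left[symmetric] core ..
  also have "\<dots> = H2 n * (K * Pf n) - (\<Sum>k=1..n. (H1 n - H1 (n-k)) / of_nat k * (K * Pf (n-k)))"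
    by (simp add: right_diff_distrib sum_distrib_left ac_simps)
  also have "\<dots> = H2 n * (s / (r - s + 1) * (1 / cbinom (of_nat n + r) (r - s + 1)))
       - (\<Sum>k=1..n. (H1 n - H1 (n-k)) / of_nat k * (s / (r - s + 1) * (1 / cbinom (of_nat (n-k) + r) (r - s + 1))))"
    unfolding G2 ..
  also have "\<dots> = s / (r - s + 1) *
         (H2 n / cbinom (of_nat n + r) (r - s + 1)
          - (\<Sum>k=1..n. (H1 n - H1 (n - k)) / (of_nat k * cbinom (of_nat (n - k) + r) (r - s + 1))))"
    by (simp add: right_diff_distrib sum_distrib_left ac_simps)
  finally show ?thesis .
qed

end
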